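(* Let $q\ge2$. If $f$ is a $q$-quasiadditive function, then $f(0)=0$ and $f(qa)=f(a)$ for all nonnegative integers $a$. If $f$ is a $q$-quasimultiplicative function, then $f(0)=1$ unless $f$ is identically $0$, and $f(qa)=f(a)$ for all nonnegative integers $a$.
   Context: A function $f$ on the nonnegative integers is $q$-quasiadditive if there is a nonnegative integer $r$ such that $f(q^{k+r}a+b)=f(a)+f(b)$ for all nonnegative integers $a,b,k$ with $0\le b<q^k$; it is $q$-quasimultiplicative if there is a nonnegative integer $r$ such that $f(q^{k+r}a+b)=f(a)f(b)$ for all such $a,b,k$. *)

theory Defs
  imports Complex_Main
begin

definition q_quasiadditive :: "nat \<Rightarrow> (nat \<Rightarrow> complex) \<Rightarrow> bool" where
  "q_quasiadditive q f \<longleftrightarrow> (\<exists>r::nat. \<forall>a b k::nat. b < q ^ k \<longrightarrow>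
      f (q ^ (k + r) * a + b) = f a + f b)"

definition q_quasimultiplicative :: "nat \<Rightarrow> (nat \<Rightarrow> complex) \<Rightarrow> bool" where
  "q_quasimultiplicative q f \<longleftrightarrow> (\<exists>r::nat. \<forall>a b k::nat. b < q ^ k \<longrightarrow>
      f (q ^ (k + r) * a + b) = f a * f b)"

end

theory Submission
  imports Defs
begin

theorem lemma6:
  fixes q :: nat
  assumes "q \<ge> 2"
  shows "(\<forall>f. q_quasiadditive q f \<longrightarrow> f 0 = 0 \<and> (\<forall>a. f (q * a) = f a))
       \<and> (\<forall>f. q_quasimultiplicative q f \<longrightarrow>
            (f 0 = 1 \<or> (\<forall>n. f n = 0)) \<and> (\<forall>a. f (q * a) = f a))"
proof (rule conjI; intro allI impI)
  fix f assume "q_quasiadditive q f"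
  then obtain r where H: "\<And>a b k. b < q ^ k \<Longrightarrow> f (q ^ (k + r) * a + b) = f a + f b"
    unfolding q_quasiadditive_def by blast
  have "f 0 = f 0 + f 0" using H[of 0 0 0] by simp
  then have f0: "f 0 = 0" by simp
  have "f (q * a) = f a" for a
  proof -
  have 1: "f (q ^ r * (q * a)) = f (q*a)" using H[of 0 0 "q*a"] f0 by simp
  have 2: "f (q ^ (1 + r) * a) = f a" using H[of 0 1 a] f0 assms by simp
  have "q ^ r * (q * a) = q ^ (1 + r) * a" by (simp add: power_add mult_ac)
  then show "f (q * a) = f a" using 1 2 by (metis mult.assoc mult.commute)
  qed
  then show "f 0 = 0 \<and> (\<forall>a. f (q * a) = f a)" using f0 by auto
next
  fix f assume "q_quasimultiplicative q f"
  then obtain r where H: "\<And>a b k. b < q ^ k \<Longrightarrow> f (q ^ (k + r) * a + b) = f a * f b"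
    unfolding q_quasimultiplicative_def by blast
  have e: "f 0 = f 0 * f 0" using H[of 0 0 0] by simp
  have z: "f n = 0" if "f 0 = 0" for n
  proof -
    have "n < q ^ n" using assms less_exp[of n] power_mono[of 2 q n] by linarith
    hence "n < q ^ n" .
    then show ?thesis using H[of n n 0] that by simp
  qed
  have A: "f 0 = 1 \<or> (\<forall>n. f n = 0)"
  proof (cases "f 0 = 0")
    case True then show ?thesis using z by auto
  next
    case False then show ?thesis using e
      by (metis mult_cancel_left1)
  qed
  have "\<forall>a. f (q * a) = f a"
  proof
  fix a
  show "f (q * a) = f a"
  proof (cases "f 0 = 0")
    case True then show ?thesis using z by auto
  next
    case False
    have f0: "f 0 = 1" using e False by (metis mult_cancel_left1)
    have 1: "f (q ^ r * (q * a)) = f (q*a)" using H[of 0 0 "q*a"] f0 by simp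
    have 2: "f (q ^ (1 + r) * a) = f a" using H[of 0 1 a] f0 assms by simp
    have "q ^ r * (q * a) = q ^ (1 + r) * a" by (simp add: power_add mult_ac)
    then show ?thesis using 1 2 by (metis mult.assoc mult.commute)
  qed
  qed
  with A show "(f 0 = 1 \<or> (\<forall>n. f n = 0)) \<and> (\<forall>a. f (q * a) = f a)" by blast
qed

end
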